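(* Let $f,g\colon (\mathbb C^n,0)\to \mathbb C$ be two germs of analytic functions. If $f$ and $g$ are bi-Lipschitz right-left equivalent, then ${\rm ord}_0(f)={\rm ord}_0(g)$.
   Context: $f$ and $g$ are bi-Lipschitz right-left equivalent if there are germs of bi-Lipschitz homeomorphisms $\varphi\colon(\mathbb C^n,0)\to(\mathbb C^n,0)$ and $\phi\colon(\mathbb C,0)\to(\mathbb C,0)$ with $f=\phi\circ g\circ\varphi$ near $0$. ${\rm ord}_0(f)$ is the smallest $k$ such that the homogeneous degree-$k$ part of the Taylor expansion of $f$ at $0$ is nonzero. *)

theory Defs
  imports "HOL-Analysis.Analysis" "HOL-Library.Extended_Nat"
begin

text \<open>Points of C^n are vectors of type complex^'n (the index type 'n is finite,
  so CARD('n) = n). Multi-indices are functions 'n => nat.\<close>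

definition monomial :: "complex ^ 'n \<Rightarrow> ('n \<Rightarrow> nat) \<Rightarrow> complex" where
  "monomial z \<alpha> = (\<Prod>i\<in>UNIV. (z $ i) ^ (\<alpha> i))"

definition mdeg :: "('n::finite \<Rightarrow> nat) \<Rightarrow> nat" where
  "mdeg \<alpha> = (\<Sum>i\<in>UNIV. \<alpha> i)"

definition power_series_at0 :: "(('n::finite \<Rightarrow> nat) \<Rightarrow> complex) \<Rightarrow> (complex ^ 'n \<Rightarrow> complex) \<Rightarrow> bool" where
  "power_series_at0 c f \<longleftrightarrow>
     (\<exists>r>0. \<forall>z. norm z < r \<longrightarrow> ((\<lambda>\<alpha>. c \<alpha> * monomial z \<alpha>) has_sum f z) UNIV)"

definition analytic_germ0 :: "(complex ^ 'n::finite \<Rightarrow> complex) \<Rightarrow> bool" where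
  "analytic_germ0 f \<longleftrightarrow> (\<exists>c. power_series_at0 c f)"

text \<open>Taylor coefficients of f at 0 (well defined by uniqueness of power series).\<close>
definition taylor_coeffs0 :: "(complex ^ 'n::finite \<Rightarrow> complex) \<Rightarrow> ('n \<Rightarrow> nat) \<Rightarrow> complex" where
  "taylor_coeffs0 f = (SOME c. power_series_at0 c f)"

definition ord0 :: "(complex ^ 'n::finite \<Rightarrow> complex) \<Rightarrow> enat" where
  "ord0 f = (let c = taylor_coeffs0 f in
     if \<exists>\<alpha>. c \<alpha> \<noteq> 0 then enat (LEAST k. \<exists>\<alpha>. mdeg \<alpha> = k \<and> c \<alpha> \<noteq> 0) else \<infinity>)"

definition bilip_homeo_germ0 :: "('a::real_normed_vector \<Rightarrow> 'a) \<Rightarrow> bool" where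
  "bilip_homeo_germ0 h \<longleftrightarrow> h 0 = 0 \<and>
     (\<exists>U K. open U \<and> 0 \<in> U \<and> inj_on h U \<and> open (h ` U) \<and> K > 0 \<and>
        (\<forall>x\<in>U. \<forall>y\<in>U. dist x y \<le> K * dist (h x) (h y) \<and> dist (h x) (h y) \<le> K * dist x y))"

text \<open>Bi-Lipschitz right-left equivalence of germs f, g : (C^n,0) -> (C,0):
  f = phi o g o varphi as germs at 0. The germs take the value 0 at 0, which is
  needed for the composition with a germ phi : (C,0) -> (C,0) to make sense.\<close>
definition bilip_RL_equiv :: "(complex ^ 'n::finite \<Rightarrow> complex) \<Rightarrow> (complex ^ 'n \<Rightarrow> complex) \<Rightarrow> bool" where
  "bilip_RL_equiv f g \<longleftrightarrow> f 0 = 0 \<and> g 0 = 0 \<and>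
     (\<exists>\<phi>\<^sub>1 \<phi>\<^sub>2. bilip_homeo_germ0 \<phi>\<^sub>1 \<and> bilip_homeo_germ0 (\<phi>\<^sub>2 :: complex \<Rightarrow> complex) \<and>
        (\<forall>\<^sub>F z in nhds 0. f z = \<phi>\<^sub>2 (g (\<phi>\<^sub>1 z))))"

end

theory Submission imports Defs "HOL-Library.Real_Mod" begin

lemma norm_has_sum_le:
  fixes f :: "'a \<Rightarrow> 'b::banach"
  assumes f: "(f has_sum a) A" and g: "(g has_sum b) A"
    and le: "\<And>x. x \<in> A \<Longrightarrow> norm (f x) \<le> g x"
  shows "norm a \<le> b"
proof -
  have s: "(\<lambda>x. norm (f x)) summable_on A"
    by (rule summable_on_comparison_test[OF has_sum_imp_summable[OF g]]) (auto intro: le)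
  have "norm a = norm (infsum f A)" using f by (simp add: infsumI)
  also have "\<dots> \<le> infsum (\<lambda>x. norm (f x)) A" by (rule norm_infsum_bound[OF s])
  also have "\<dots> \<le> infsum g A" by (rule infsum_mono[OF s has_sum_imp_summable[OF g]]) (auto intro: le)
  also have "\<dots> = b" using g by (simp add: infsumI)
  finally show ?thesis .
qed

lemma has_sum_sum_fin:
  fixes f :: "'i \<Rightarrow> 'a \<Rightarrow> 'b::{topological_comm_monoid_add}"
  assumes "finite I" "\<And>i. i \<in> I \<Longrightarrow> (f i has_sum s i) A"
  shows "((\<lambda>x. \<Sum>i\<in>I. f i x) has_sum (\<Sum>i\<in>I. s i)) A"
  using assms
proof (induction I rule: finite_induct)
  case empty then show ?case by simp
next
  case (insert j I)
  then show ?case by (simp add: has_sum_add)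
qed

lemma monomial_bound: "norm (monomial z \<alpha>) \<le> norm z ^ mdeg \<alpha>"
proof -
  have "norm (monomial z \<alpha>) = (\<Prod>i\<in>UNIV. norm (z $ i) ^ \<alpha> i)"
    unfolding monomial_def by (simp add: prod_norm[symmetric] norm_power)
  also have "\<dots> \<le> (\<Prod>i\<in>UNIV. norm z ^ \<alpha> i)"
    by (intro prod_mono conjI power_mono) (auto simp: Finite_Cartesian_Product.norm_nth_le)
  also have "\<dots> = norm z ^ mdeg \<alpha>" by (simp add: mdeg_def power_sum)
  finally show ?thesis .
qed

lemma monomial_const: "monomial (\<chi> i. c) \<alpha> = c ^ mdeg \<alpha>"
  by (simp add: monomial_def mdeg_def power_sum)

lemma monomial_zero: "monomial 0 \<alpha> = (if \<alpha> = (\<lambda>_. 0) then 1 else 0)"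
proof (cases "\<alpha> = (\<lambda>_. 0)")
  case True then show ?thesis by (simp add: monomial_def)
next
  case False
  then obtain i where "\<alpha> i \<noteq> 0" by auto
  then have "(0::complex) ^ \<alpha> i = 0" by simp
  then show ?thesis using False unfolding monomial_def
    by (simp add: prod_zero_iff) blast
qed

lemma mdeg_zero_iff: "mdeg \<alpha> = 0 \<longleftrightarrow> \<alpha> = (\<lambda>_. 0)"
  by (auto simp: mdeg_def)


definition Gr :: "('a::real_normed_vector \<Rightarrow> 'b::real_normed_vector) \<Rightarrow> nat \<Rightarrow> bool" where
  "Gr f k \<longleftrightarrow> (\<exists>C \<delta>. \<delta> > 0 \<and> (\<forall>z. norm z < \<delta> \<longrightarrow> norm (f z) \<le> C * norm z ^ k))"

lemma norm_vec_le_sum: "norm (x::'a::real_normed_vector^'n) \<le> (\<Sum>i\<in>UNIV. norm (x$i))"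
  by (simp add: norm_vec_def L2_set_le_sum)

lemma ps_abs:
  fixes c :: "('n::finite \<Rightarrow> nat) \<Rightarrow> complex" and f :: "complex^'n \<Rightarrow> complex"
  assumes hs: "\<forall>z. norm z < r \<longrightarrow> ((\<lambda>\<alpha>. c \<alpha> * monomial z \<alpha>) has_sum f z) UNIV" and r: "r > 0"
  obtains \<rho>0 where "\<rho>0 > 0" "\<rho>0 < r" "(\<lambda>\<alpha>. norm (c \<alpha>) * \<rho>0 ^ mdeg \<alpha>) summable_on UNIV"
proof -
  define n where "n = real CARD('n)"
  have n1: "n \<ge> 1" unfolding n_def by (simp add: Suc_le_eq)
  define \<rho>0 where "\<rho>0 = r / (2 * n)"
  have \<rho>0: "\<rho>0 > 0" using r n1 by (simp add: \<rho>0_def)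
  have nr: "n * \<rho>0 = r / 2" using n1 by (simp add: \<rho>0_def)
  have \<rho>0r: "\<rho>0 < r" proof - have "\<rho>0 \<le> n * \<rho>0" using n1 \<rho>0 by simp then show ?thesis using nr r by linarith qed
  define p :: "complex^'n" where "p = (\<chi> i. complex_of_real \<rho>0)"
  have "norm p \<le> (\<Sum>i\<in>UNIV. norm (p$i))" by (rule norm_vec_le_sum)
  also have "\<dots> = n * \<rho>0" using \<rho>0 by (simp add: p_def n_def)
  finally have "norm p < r" using nr r by simp
  with hs have "((\<lambda>\<alpha>. c \<alpha> * monomial p \<alpha>) has_sum f p) UNIV" by blast
  then have "(\<lambda>\<alpha>. c \<alpha> * monomial p \<alpha>) summable_on UNIV" by (rule has_sum_imp_summable)
  then have "(\<lambda>\<alpha>. norm (c \<alpha> * monomial p \<alpha>)) summable_on UNIV"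
    by (metis summable_on_iff_abs_summable_on_complex)
  moreover have "norm (c \<alpha> * monomial p \<alpha>) = norm (c \<alpha>) * \<rho>0 ^ mdeg \<alpha>" for \<alpha>
    using \<rho>0 by (simp add: p_def monomial_const norm_mult norm_power)
  ultimately show ?thesis using that \<rho>0 \<rho>0r by simp
qed

lemma ps_upper:
  fixes c :: "('n::finite \<Rightarrow> nat) \<Rightarrow> complex" and f :: "complex^'n \<Rightarrow> complex"
  assumes hs: "\<forall>z. norm z < r \<longrightarrow> ((\<lambda>\<alpha>. c \<alpha> * monomial z \<alpha>) has_sum f z) UNIV" and r: "r > 0"
    and zero: "\<forall>\<alpha>. mdeg \<alpha> < k \<longrightarrow> c \<alpha> = 0"
  shows "Gr f k"
proof -
  obtain \<rho>0 where \<rho>0: "\<rho>0 > 0" "\<rho>0 < r" and sm: "(\<lambda>\<alpha>. norm (c \<alpha>) * \<rho>0 ^ mdeg \<alpha>) summable_on UNIV"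
    using ps_abs[OF hs r] by blast
  define M where "M = infsum (\<lambda>\<alpha>. norm (c \<alpha>) * \<rho>0 ^ mdeg \<alpha>) UNIV"
  have hM: "((\<lambda>\<alpha>. norm (c \<alpha>) * \<rho>0 ^ mdeg \<alpha>) has_sum M) UNIV" using sm by (simp add: M_def)
  have "norm (f z) \<le> (M / \<rho>0 ^ k) * norm z ^ k" if z: "norm z < \<rho>0" for z
  proof -
    define t where "t = norm z / \<rho>0"
    have t: "0 \<le> t" "t \<le> 1" using z \<rho>0 by (auto simp: t_def)
    have h1: "((\<lambda>\<alpha>. c \<alpha> * monomial z \<alpha>) has_sum f z) UNIV" using hs z \<rho>0 by auto
    have h2: "((\<lambda>\<alpha>. norm (c \<alpha>) * \<rho>0 ^ mdeg \<alpha> * t ^ k) has_sum M * t ^ k) UNIV"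
      by (rule has_sum_cmult_left[OF hM])
    have "norm (c \<alpha> * monomial z \<alpha>) \<le> norm (c \<alpha>) * \<rho>0 ^ mdeg \<alpha> * t ^ k" for \<alpha>
    proof (cases "mdeg \<alpha> < k")
      case True then show ?thesis using zero t \<rho>0 by simp
    next
      case False
      have "norm (c \<alpha> * monomial z \<alpha>) \<le> norm (c \<alpha>) * norm z ^ mdeg \<alpha>"
        by (simp add: norm_mult mult_left_mono monomial_bound)
      also have "norm z ^ mdeg \<alpha> = \<rho>0 ^ mdeg \<alpha> * t ^ mdeg \<alpha>"
        using \<rho>0 by (simp add: t_def power_divide)
      also have "t ^ mdeg \<alpha> \<le> t ^ k" using False t by (intro power_decreasing) auto
      then have "\<rho>0 ^ mdeg \<alpha> * t ^ mdeg \<alpha> \<le> \<rho>0 ^ mdeg \<alpha> * t ^ k" using \<rho>0 by simp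
      finally show ?thesis by (simp add: mult_left_mono mult.assoc)
    qed
    then have "norm (f z) \<le> M * t ^ k" by (intro norm_has_sum_le[OF h1 h2]) auto
    also have "\<dots> = (M / \<rho>0 ^ k) * norm z ^ k" by (simp add: t_def power_divide)
    finally show ?thesis .
  qed
  then show ?thesis unfolding Gr_def using \<rho>0 by blast
qed


lemma roots_orth:
  assumes N: "N > 0"
  shows "(\<Sum>j<N. cis (2*pi*real j/real N) ^ d) = (if N dvd d then of_nat N else 0)"
proof -
  define x where "x = cis (2*pi*real d/real N)"
  have e: "cis (2*pi*real j/real N) ^ d = x ^ j" for j
    unfolding x_def Complex.DeMoivre by (simp add: field_simps)
  show ?thesis
  proof (cases "N dvd d")
    case True
    then obtain q where q: "d = N * q" by blast
    have "x = cis (2 * pi * real q)" using N by (simp add: x_def q field_simps)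
    also have "\<dots> = 1" by (rule cis_multiple_2pi) simp
    finally show ?thesis using True by (simp add: e)
  next
    case False
    have x1: "x \<noteq> 1"
    proof
      assume "x = 1"
      then obtain n where n: "2*pi*real d/real N = of_int n * (2*pi)"
        unfolding x_def cis_eq_1_iff by blast
      then have "real d = real N * of_int n" using N by (simp add: field_simps)
      then have "int d = int N * n" by (metis of_int_eq_iff of_int_mult of_int_of_nat_eq)
      then have "int N dvd int d" by simp
      then show False using False by simp
    qed
    have "x ^ N = cis (2 * pi * real d)" unfolding x_def Complex.DeMoivre using N by (simp add: field_simps)
    also have "\<dots> = 1" by (rule cis_multiple_2pi) simp
    finally have "x ^ N = 1" .
    then show ?thesis using False x1 by (simp add: e geometric_sum)
  qed
qed


lemma prod_if_const:
  fixes a :: "'b::{comm_semiring_1,semiring_no_zero_divisors}"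
  shows "(\<Prod>i\<in>(UNIV::'n::finite set). if P i then a else 0) = (if (\<forall>i. P i) then a ^ CARD('n) else 0)"
proof (cases "\<forall>i. P i")
  case True then show ?thesis by simp
next
  case False
  then obtain i where "\<not> P i" by blast
  then show ?thesis using False by (intro trans[OF prod_zero]) auto
qed

lemma avg_monomial:
  fixes \<alpha>0 \<beta> :: "'n::finite \<Rightarrow> nat"
  assumes N: "N > 0"
  shows "(\<Sum>J\<in>PiE UNIV (\<lambda>_. {..<N}). (\<Prod>i\<in>UNIV. cis (2*pi*real (J i)/real N) ^ (N - \<alpha>0 i)) *
            monomial (\<chi> i. complex_of_real \<rho> * cis (2*pi*real (J i)/real N)) \<beta>)
     = complex_of_real \<rho> ^ mdeg \<beta> * (if (\<forall>i. N dvd \<beta> i + (N - \<alpha>0 i)) then of_nat N ^ CARD('n) else 0)"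
proof -
  define \<omega> where "\<omega> = (\<lambda>j::nat. cis (2*pi*real j/real N))"
  define h where "h = (\<lambda>i j. \<omega> j ^ (\<beta> i + (N - \<alpha>0 i)))"
  have t: "(\<Prod>i\<in>UNIV. \<omega> (J i) ^ (N - \<alpha>0 i)) * monomial (\<chi> i. complex_of_real \<rho> * \<omega> (J i)) \<beta>
       = complex_of_real \<rho> ^ mdeg \<beta> * (\<Prod>i\<in>UNIV. h i (J i))" for J
  proof -
    have "monomial (\<chi> i. complex_of_real \<rho> * \<omega> (J i)) \<beta>
        = (\<Prod>i\<in>UNIV. complex_of_real \<rho> ^ \<beta> i) * (\<Prod>i\<in>UNIV. \<omega> (J i) ^ \<beta> i)"
      by (simp add: monomial_def power_mult_distrib prod.distrib)
    also have "(\<Prod>i\<in>UNIV. complex_of_real \<rho> ^ \<beta> i) = complex_of_real \<rho> ^ mdeg \<beta>"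
      by (simp add: mdeg_def power_sum)
    finally show ?thesis
      by (simp add: h_def power_add prod.distrib mult_ac)
  qed
  have "(\<Sum>J\<in>PiE UNIV (\<lambda>_. {..<N}). (\<Prod>i\<in>UNIV. \<omega> (J i) ^ (N - \<alpha>0 i)) *
            monomial (\<chi> i. complex_of_real \<rho> * \<omega> (J i)) \<beta>)
      = complex_of_real \<rho> ^ mdeg \<beta> * (\<Sum>J\<in>PiE UNIV (\<lambda>_. {..<N}). \<Prod>i\<in>UNIV. h i (J i))"
    by (simp add: t sum_distrib_left)
  also have "(\<Sum>J\<in>PiE UNIV (\<lambda>_. {..<N}). \<Prod>i\<in>UNIV. h i (J i)) = (\<Prod>i\<in>UNIV. \<Sum>j\<in>{..<N}. h i j)"
    by (rule prod_sum_PiE[symmetric]) auto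
  also have "\<dots> = (\<Prod>i\<in>UNIV. if N dvd \<beta> i + (N - \<alpha>0 i) then of_nat N else 0)"
    unfolding h_def \<omega>_def using roots_orth[OF N] by simp
  also have "\<dots> = (if (\<forall>i. N dvd \<beta> i + (N - \<alpha>0 i)) then of_nat N ^ CARD('n) else 0)"
    by (rule prod_if_const)
  finally show ?thesis unfolding \<omega>_def .
qed

lemma ind_deg:
  fixes \<alpha>0 \<beta> :: "'n::finite \<Rightarrow> nat"
  assumes lt: "\<forall>i. \<alpha>0 i < N" and ind: "\<forall>i. N dvd \<beta> i + (N - \<alpha>0 i)" and ne: "\<beta> \<noteq> \<alpha>0"
  shows "mdeg \<beta> \<ge> mdeg \<alpha>0 + N"
proof -
  have ge: "\<beta> i \<ge> \<alpha>0 i \<and> (\<beta> i \<noteq> \<alpha>0 i \<longrightarrow> \<beta> i \<ge> \<alpha>0 i + N)" for i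
  proof -
    obtain q where q: "\<beta> i + (N - \<alpha>0 i) = N * q" using ind by blast
    have "q \<noteq> 0" proof assume "q = 0" then show False using q lt[rule_format, of i] by simp qed
    show ?thesis
    proof (cases "q = 1")
      case True then show ?thesis using q lt[rule_format, of i] by auto
    next
      case False
      then have "q \<ge> 2" using \<open>q \<noteq> 0\<close> by linarith
      then have "N * q \<ge> N * 2" by simp
      then show ?thesis using q lt[rule_format, of i] by linarith
    qed
  qed
  obtain i0 where i0: "\<beta> i0 \<noteq> \<alpha>0 i0" using ne by blast
  have "mdeg \<beta> = \<beta> i0 + (\<Sum>i\<in>UNIV-{i0}. \<beta> i)" unfolding mdeg_def by (simp add: sum.remove)
  moreover have "mdeg \<alpha>0 = \<alpha>0 i0 + (\<Sum>i\<in>UNIV-{i0}. \<alpha>0 i)" unfolding mdeg_def by (simp add: sum.remove)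
  moreover have "(\<Sum>i\<in>UNIV-{i0}. \<alpha>0 i) \<le> (\<Sum>i\<in>UNIV-{i0}. \<beta> i)" by (intro sum_mono) (use ge in blast)
  moreover have "\<beta> i0 \<ge> \<alpha>0 i0 + N" using ge i0 by blast
  ultimately show ?thesis by linarith
qed


lemma ps_lower:
  fixes c :: "('n::finite \<Rightarrow> nat) \<Rightarrow> complex" and f :: "complex^'n \<Rightarrow> complex"
  assumes hs: "\<forall>z. norm z < r \<longrightarrow> ((\<lambda>\<alpha>. c \<alpha> * monomial z \<alpha>) has_sum f z) UNIV" and r: "r > 0"
    and G: "Gr f k"
  shows "\<forall>\<alpha>. mdeg \<alpha> < k \<longrightarrow> c \<alpha> = 0"
proof (rule ccontr)
  assume "\<not> ?thesis"
  then obtain \<alpha>0 where a0: "mdeg \<alpha>0 < k" "c \<alpha>0 \<noteq> 0" by blast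
  define m where "m = mdeg \<alpha>0"
  define N where "N = m + 1"
  have N: "N > 0" by (simp add: N_def)
  have lt: "\<forall>i. \<alpha>0 i < N"
  proof
    fix i
    have "\<alpha>0 i \<le> mdeg \<alpha>0" unfolding mdeg_def by (rule member_le_sum) auto
    then show "\<alpha>0 i < N" by (simp add: N_def m_def)
  qed
  obtain \<rho>0 where \<rho>0: "\<rho>0 > 0" "\<rho>0 < r" and sm: "(\<lambda>\<alpha>. norm (c \<alpha>) * \<rho>0 ^ mdeg \<alpha>) summable_on UNIV"
    using ps_abs[OF hs r] by blast
  define M where "M = infsum (\<lambda>\<alpha>. norm (c \<alpha>) * \<rho>0 ^ mdeg \<alpha>) UNIV"
  have hM: "((\<lambda>\<alpha>. norm (c \<alpha>) * \<rho>0 ^ mdeg \<alpha>) has_sum M) UNIV" using sm by (simp add: M_def)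
  have M0: "M \<ge> 0" by (rule has_sum_nonneg[OF hM]) (use \<rho>0 in simp)
  obtain C0 \<delta> where \<delta>: "\<delta> > 0" and bnd0: "\<forall>z. norm z < \<delta> \<longrightarrow> norm (f z) \<le> C0 * norm z ^ k"
    using G unfolding Gr_def by blast
  define C where "C = \<bar>C0\<bar>"
  have C0: "C \<ge> 0" by (simp add: C_def)
  have bnd: "norm (f z) \<le> C * norm z ^ k" if "norm z < \<delta>" for z
  proof -
    have "C0 * norm z ^ k \<le> C * norm z ^ k" unfolding C_def by (intro mult_right_mono) auto
    then show ?thesis using bnd0 that by force
  qed
  define n where "n = real CARD('n)"
  have n1: "n \<ge> 1" unfolding n_def by (simp add: Suc_le_eq)
  define B where "B = C * n ^ k + M / \<rho>0 ^ (m + N)"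
  have B0: "B \<ge> 0" using C0 M0 \<rho>0 n1 by (simp add: B_def)
  define ca where "ca = norm (c \<alpha>0)"
  have ca: "ca > 0" using a0 by (simp add: ca_def)
  define \<rho> where "\<rho> = min (min \<rho>0 1) (min (min (r/(2*n)) (\<delta>/(2*n))) (ca/(2*(B+1))))"
  have \<rho>pos: "\<rho> > 0" using \<rho>0 r \<delta> n1 ca B0 by (simp add: \<rho>_def)
  have \<rho>\<rho>0: "\<rho> \<le> \<rho>0" and \<rho>1: "\<rho> \<le> 1" by (auto simp: \<rho>_def)
  have "\<rho> \<le> r/(2*n)" by (simp add: \<rho>_def)
  then have n\<rho>r: "n * \<rho> < r" using n1 r by (simp add: field_simps)
  have "\<rho> \<le> \<delta>/(2*n)" by (simp add: \<rho>_def)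
  then have n\<rho>\<delta>: "n * \<rho> < \<delta>" using n1 \<delta> by (simp add: field_simps)
  have "\<rho> \<le> ca/(2*(B+1))" by (simp add: \<rho>_def)
  then have "\<rho> * (B+1) \<le> ca / 2" using B0 by (simp add: field_simps)
  then have B\<rho>: "B * \<rho> < ca" using \<rho>pos ca by (simp add: algebra_simps)
  define \<omega> where "\<omega> = (\<lambda>j::nat. cis (2*pi*real j/real N))"
  define Js where "Js = PiE (UNIV::'n set) (\<lambda>_. {..<N})"
  have fJs: "finite Js" unfolding Js_def by (intro finite_PiE) auto
  have cJs: "card Js = N ^ CARD('n)" unfolding Js_def by (simp add: card_PiE)
  define zp where "zp = (\<lambda>J. (\<chi> i. complex_of_real \<rho> * \<omega> (J i)) :: complex^'n)"
  define wt where "wt = (\<lambda>J. \<Prod>i\<in>UNIV. \<omega> (J i) ^ (N - \<alpha>0 i))"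
  have nzp: "norm (zp J) \<le> n * \<rho>" for J
  proof -
    have "norm (zp J) \<le> (\<Sum>i\<in>UNIV. norm (zp J $ i))" by (rule norm_vec_le_sum)
    also have "\<dots> = n * \<rho>" using \<rho>pos by (simp add: zp_def \<omega>_def norm_mult n_def)
    finally show ?thesis .
  qed
  have nwt: "norm (wt J) = 1" for J by (simp add: wt_def \<omega>_def prod_norm[symmetric] norm_power)
  define ind where "ind = (\<lambda>\<beta>::'n\<Rightarrow>nat. \<forall>i. N dvd \<beta> i + (N - \<alpha>0 i))"
  define T where "T = (\<lambda>\<beta>. c \<beta> * (complex_of_real \<rho> ^ mdeg \<beta> * (if ind \<beta> then of_nat N ^ CARD('n) else 0)))"
  define A where "A = (\<Sum>J\<in>Js. wt J * f (zp J))"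
  have hA: "((\<lambda>\<beta>. \<Sum>J\<in>Js. wt J * (c \<beta> * monomial (zp J) \<beta>)) has_sum A) UNIV"
    unfolding A_def
  proof (rule has_sum_sum_fin[OF fJs])
    fix J
    have "norm (zp J) < r" using nzp[of J] n\<rho>r by linarith
    then have "((\<lambda>\<beta>. c \<beta> * monomial (zp J) \<beta>) has_sum f (zp J)) UNIV" using hs by blast
    then show "((\<lambda>\<beta>. wt J * (c \<beta> * monomial (zp J) \<beta>)) has_sum wt J * f (zp J)) UNIV"
      by (rule has_sum_cmult_right)
  qed
  have eqT: "(\<Sum>J\<in>Js. wt J * (c \<beta> * monomial (zp J) \<beta>)) = T \<beta>" for \<beta>
  proof -
    have "(\<Sum>J\<in>Js. wt J * (c \<beta> * monomial (zp J) \<beta>)) = c \<beta> * (\<Sum>J\<in>Js. wt J * monomial (zp J) \<beta>)"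
      by (simp add: sum_distrib_left mult_ac)
    also have "(\<Sum>J\<in>Js. wt J * monomial (zp J) \<beta>) =
       complex_of_real \<rho> ^ mdeg \<beta> * (if ind \<beta> then of_nat N ^ CARD('n) else 0)"
      unfolding Js_def wt_def zp_def \<omega>_def ind_def by (rule avg_monomial[OF N])
    finally show ?thesis by (simp add: T_def)
  qed
  have hT: "(T has_sum A) UNIV" using hA eqT by simp
  define v where "v = c \<alpha>0 * (complex_of_real \<rho> ^ m * of_nat N ^ CARD('n))"
  have ind_a0: "ind \<alpha>0" unfolding ind_def using lt by (simp add: less_imp_le)
  have T_a0: "T \<alpha>0 = v" by (simp add: T_def v_def ind_a0 m_def)
  have hS: "((\<lambda>\<beta>. if \<beta> = \<alpha>0 then v else 0) has_sum v) UNIV"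
    by (rule has_sum_finite_neutralI[of "{\<alpha>0}"]) auto
  have hT1: "((\<lambda>\<beta>. T \<beta> + - (if \<beta> = \<alpha>0 then v else 0)) has_sum (A + - v)) UNIV"
    by (intro has_sum_add hT has_sum_uminusI hS)
  define t where "t = \<rho> / \<rho>0"
  have t: "0 \<le> t" "t \<le> 1" using \<rho>pos \<rho>\<rho>0 \<rho>0 by (auto simp: t_def)
  have hB: "((\<lambda>\<beta>. real N ^ CARD('n) * (norm (c \<beta>) * \<rho>0 ^ mdeg \<beta> * t ^ (m + N))) has_sum
              real N ^ CARD('n) * (M * t ^ (m + N))) UNIV"
    by (intro has_sum_cmult_right has_sum_cmult_left hM)
  have "norm (T \<beta> + - (if \<beta> = \<alpha>0 then v else 0)) \<le> real N ^ CARD('n) * (norm (c \<beta>) * \<rho>0 ^ mdeg \<beta> * t ^ (m + N))" for \<beta>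
  proof (cases "\<beta> = \<alpha>0 \<or> \<not> ind \<beta>")
    case True
    then have "T \<beta> + - (if \<beta> = \<alpha>0 then v else 0) = 0" using T_a0 by (auto simp: T_def)
    then show ?thesis using t \<rho>0 by simp
  next
    case False
    then have deg: "mdeg \<beta> \<ge> m + N" using ind_deg[OF lt] by (auto simp: ind_def m_def)
    have "norm (T \<beta> + - (if \<beta> = \<alpha>0 then v else 0)) = norm (c \<beta>) * \<rho> ^ mdeg \<beta> * real N ^ CARD('n)"
      using False \<rho>pos by (simp add: T_def norm_mult norm_power)
    also have "\<rho> ^ mdeg \<beta> = \<rho>0 ^ mdeg \<beta> * t ^ mdeg \<beta>" using \<rho>0 by (simp add: t_def power_divide)
    also have "t ^ mdeg \<beta> \<le> t ^ (m + N)" using deg t by (intro power_decreasing) auto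
    then have "norm (c \<beta>) * (\<rho>0 ^ mdeg \<beta> * t ^ mdeg \<beta>) * real N ^ CARD('n) \<le>
               norm (c \<beta>) * (\<rho>0 ^ mdeg \<beta> * t ^ (m + N)) * real N ^ CARD('n)"
      using \<rho>0 by (intro mult_right_mono mult_left_mono) auto
    finally show ?thesis by (simp add: mult_ac)
  qed
  then have e1: "norm (A + - v) \<le> real N ^ CARD('n) * (M * t ^ (m + N))"
    by (intro norm_has_sum_le[OF hT1 hB]) auto
  have "norm A \<le> (\<Sum>J\<in>Js. norm (wt J * f (zp J)))" unfolding A_def by (rule norm_sum)
  also have "\<dots> \<le> (\<Sum>J\<in>Js. C * (n * \<rho>) ^ k)"
  proof (rule sum_mono)
    fix J
    have "norm (zp J) < \<delta>" using nzp[of J] n\<rho>\<delta> by linarith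
    then have "norm (f (zp J)) \<le> C * norm (zp J) ^ k" by (rule bnd)
    also have "\<dots> \<le> C * (n * \<rho>) ^ k" using C0 nzp[of J] by (intro mult_left_mono power_mono) auto
    finally show "norm (wt J * f (zp J)) \<le> C * (n * \<rho>) ^ k" by (simp add: norm_mult nwt)
  qed
  also have "\<dots> = real N ^ CARD('n) * (C * (n * \<rho>) ^ k)" using cJs by simp
  finally have e2: "norm A \<le> real N ^ CARD('n) * (C * (n * \<rho>) ^ k)" .
  have "norm v \<le> norm A + norm (A + - v)"
    using norm_triangle_ineq4[of A "A + - v"] by simp
  also have "norm v = real N ^ CARD('n) * (ca * \<rho> ^ m)" using \<rho>pos by (simp add: v_def norm_mult norm_power ca_def)
  finally have "real N ^ CARD('n) * (ca * \<rho> ^ m) \<le> real N ^ CARD('n) * (C * (n * \<rho>) ^ k + M * t ^ (m + N))"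
    using e1 e2 by (simp add: algebra_simps)
  then have e3: "ca * \<rho> ^ m \<le> C * (n * \<rho>) ^ k + M * t ^ (m + N)" using N by simp
  have "\<rho> ^ k \<le> \<rho> ^ (m + 1)" using a0 \<rho>1 \<rho>pos by (intro power_decreasing) (auto simp: m_def)
  then have e4: "C * (n * \<rho>) ^ k \<le> C * n ^ k * \<rho> ^ (m + 1)"
    using C0 n1 by (simp add: power_mult_distrib mult.assoc mult_left_mono)
  have "\<rho> ^ (m + N) \<le> \<rho> ^ (m + 1)" using N \<rho>1 \<rho>pos by (intro power_decreasing) auto
  then have e5: "M * t ^ (m + N) \<le> M / \<rho>0 ^ (m + N) * \<rho> ^ (m + 1)"
    using M0 \<rho>0 by (simp add: t_def power_divide divide_right_mono mult_left_mono)
  have "ca * \<rho> ^ m \<le> B * \<rho> ^ (m + 1)" using e3 e4 e5 by (simp add: B_def algebra_simps)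
  then have "ca * \<rho> ^ m \<le> (B * \<rho>) * \<rho> ^ m" by (simp add: mult_ac)
  then have "ca \<le> B * \<rho>" using \<rho>pos by simp
  then show False using B\<rho> by simp
qed


lemma Gr_nonneg:
  assumes "Gr f k"
  obtains C \<delta> where "\<delta> > 0" "C \<ge> 0" "\<And>z. norm z < \<delta> \<Longrightarrow> norm (f z) \<le> C * norm z ^ k"
proof -
  obtain C0 \<delta> where \<delta>: "\<delta> > 0" and b: "\<forall>z. norm z < \<delta> \<longrightarrow> norm (f z) \<le> C0 * norm z ^ k"
    using assms unfolding Gr_def by blast
  have "norm (f z) \<le> \<bar>C0\<bar> * norm z ^ k" if "norm z < \<delta>" for z
  proof -
    have "C0 * norm z ^ k \<le> \<bar>C0\<bar> * norm z ^ k" by (intro mult_right_mono) auto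
    then show ?thesis using b that by force
  qed
  then show ?thesis using that \<delta> by (meson abs_ge_zero)
qed

lemma ball_in_open:
  assumes "open U" "(0::'a::real_normed_vector) \<in> U"
  obtains e where "e > 0" "\<And>z. norm z < e \<Longrightarrow> z \<in> U"
proof -
  obtain e where "e > 0" "ball 0 e \<subseteq> U" using assms open_contains_ball by blast
  then show ?thesis using that by (auto simp: subset_iff dist_norm)
qed

lemma transfer1:
  fixes f g :: "'a::real_normed_vector \<Rightarrow> 'b::real_normed_vector"
  assumes p1: "bilip_homeo_germ0 \<phi>1" and p2: "bilip_homeo_germ0 \<phi>2"
    and ev: "\<forall>\<^sub>F z in nhds 0. f z = \<phi>2 (g (\<phi>1 z))"
    and g1: "Gr g 1" and gk: "Gr g k"
  shows "Gr f k"
proof -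
  obtain U1 K1 where U1: "open U1" "0 \<in> U1" "K1 > 0" and L1: "\<forall>x\<in>U1. \<forall>y\<in>U1. dist x y \<le> K1 * dist (\<phi>1 x) (\<phi>1 y) \<and> dist (\<phi>1 x) (\<phi>1 y) \<le> K1 * dist x y"
    and z1: "\<phi>1 0 = 0" using p1 unfolding bilip_homeo_germ0_def by blast
  obtain U2 K2 where U2: "open U2" "0 \<in> U2" "K2 > 0" and L2: "\<forall>x\<in>U2. \<forall>y\<in>U2. dist x y \<le> K2 * dist (\<phi>2 x) (\<phi>2 y) \<and> dist (\<phi>2 x) (\<phi>2 y) \<le> K2 * dist x y"
    and z2: "\<phi>2 0 = 0" using p2 unfolding bilip_homeo_germ0_def by blast
  obtain e1 where e1: "e1 > 0" "\<And>z. norm z < e1 \<Longrightarrow> z \<in> U1" using ball_in_open[OF U1(1,2)] by blast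
  obtain e2 where e2: "e2 > 0" "\<And>z. norm z < e2 \<Longrightarrow> z \<in> U2" using ball_in_open[OF U2(1,2)] by blast
  obtain \<eta> where \<eta>: "\<eta> > 0" "\<And>z. norm z < \<eta> \<Longrightarrow> f z = \<phi>2 (g (\<phi>1 z))"
    using ev unfolding eventually_nhds_metric by (auto simp: dist_norm)
  obtain C1 d1 where d1: "d1 > 0" "C1 \<ge> 0" "\<And>z. norm z < d1 \<Longrightarrow> norm (g z) \<le> C1 * norm z ^ 1"
    using Gr_nonneg[OF g1] by blast
  obtain C d where d: "d > 0" "C \<ge> 0" "\<And>z. norm z < d \<Longrightarrow> norm (g z) \<le> C * norm z ^ k"
    using Gr_nonneg[OF gk] by blast
  define D where "D = min (min e1 \<eta>) (min (min (d/K1) (d1/K1)) (e2/((C1+1)*K1)))"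
  have D: "D > 0" using e1 \<eta> d d1 e2 U1 U2 by (simp add: D_def)
  have "norm (f z) \<le> (K2 * C * K1 ^ k) * norm z ^ k" if z: "norm z < D" for z
  proof -
    have zU: "z \<in> U1" using z e1 by (simp add: D_def)
    have feq: "f z = \<phi>2 (g (\<phi>1 z))" using z \<eta> by (simp add: D_def)
    have nw: "norm (\<phi>1 z) \<le> K1 * norm z" using L1 zU U1(2) z1 by (auto simp: dist_norm)
    have "K1 * norm z < K1 * (d/K1)" using z U1(3) by (intro mult_strict_left_mono) (auto simp: D_def)
    then have wd: "norm (\<phi>1 z) < d" using nw U1(3) by simp
    have "K1 * norm z < K1 * (d1/K1)" using z U1(3) by (intro mult_strict_left_mono) (auto simp: D_def)
    then have wd1: "norm (\<phi>1 z) < d1" using nw U1(3) by simp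
    have "norm (g (\<phi>1 z)) \<le> C1 * norm (\<phi>1 z)" using d1(3)[OF wd1] by simp
    also have "\<dots> \<le> C1 * (K1 * norm z)" using nw d1(2) by (intro mult_left_mono) auto
    also have "\<dots> \<le> (C1 + 1) * (K1 * norm z)" using U1(3) by (intro mult_right_mono) auto
    also have "\<dots> < (C1 + 1) * K1 * (e2/((C1+1)*K1))"
      using z d1(2) U1(3) by (simp only: mult.assoc[symmetric]) (intro mult_strict_left_mono, auto simp: D_def)
    also have "\<dots> = e2" using d1(2) U1(3) by simp
    finally have gU: "g (\<phi>1 z) \<in> U2" using e2 by blast
    have "norm (f z) \<le> K2 * norm (g (\<phi>1 z))" using feq L2 gU U2(2) z2 by (auto simp: dist_norm)
    also have "\<dots> \<le> K2 * (C * norm (\<phi>1 z) ^ k)" using d(3)[OF wd] U2(3) by simp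
    also have "\<dots> \<le> K2 * (C * (K1 * norm z) ^ k)"
      using nw U2(3) d(2) by (intro mult_left_mono power_mono) auto
    finally show ?thesis by (simp add: power_mult_distrib mult_ac)
  qed
  then show ?thesis unfolding Gr_def using D by blast
qed

lemma transfer2:
  fixes f g :: "'a::real_normed_vector \<Rightarrow> 'b::real_normed_vector"
  assumes p1: "bilip_homeo_germ0 \<phi>1" and p2: "bilip_homeo_germ0 \<phi>2"
    and ev: "\<forall>\<^sub>F z in nhds 0. f z = \<phi>2 (g (\<phi>1 z))"
    and g1: "Gr g 1" and fk: "Gr f k"
  shows "Gr g k"
proof -
  obtain U1 K1 where U1: "open U1" "0 \<in> U1" "K1 > 0" "open (\<phi>1 ` U1)" and L1: "\<forall>x\<in>U1. \<forall>y\<in>U1. dist x y \<le> K1 * dist (\<phi>1 x) (\<phi>1 y) \<and> dist (\<phi>1 x) (\<phi>1 y) \<le> K1 * dist x y"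
    and z1: "\<phi>1 0 = 0" using p1 unfolding bilip_homeo_germ0_def by blast
  obtain U2 K2 where U2: "open U2" "0 \<in> U2" "K2 > 0" and L2: "\<forall>x\<in>U2. \<forall>y\<in>U2. dist x y \<le> K2 * dist (\<phi>2 x) (\<phi>2 y) \<and> dist (\<phi>2 x) (\<phi>2 y) \<le> K2 * dist x y"
    and z2: "\<phi>2 0 = 0" using p2 unfolding bilip_homeo_germ0_def by blast
  have "0 \<in> \<phi>1 ` U1" using U1(2) z1 by force
  then obtain e1 where e1: "e1 > 0" "\<And>w. norm w < e1 \<Longrightarrow> w \<in> \<phi>1 ` U1" using ball_in_open[OF U1(4)] by blast
  obtain e2 where e2: "e2 > 0" "\<And>z. norm z < e2 \<Longrightarrow> z \<in> U2" using ball_in_open[OF U2(1,2)] by blast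
  obtain \<eta> where \<eta>: "\<eta> > 0" "\<And>z. norm z < \<eta> \<Longrightarrow> f z = \<phi>2 (g (\<phi>1 z))"
    using ev unfolding eventually_nhds_metric by (auto simp: dist_norm)
  obtain C1 d1 where d1: "d1 > 0" "C1 \<ge> 0" "\<And>z. norm z < d1 \<Longrightarrow> norm (g z) \<le> C1 * norm z ^ 1"
    using Gr_nonneg[OF g1] by blast
  obtain C d where d: "d > 0" "C \<ge> 0" "\<And>z. norm z < d \<Longrightarrow> norm (f z) \<le> C * norm z ^ k"
    using Gr_nonneg[OF fk] by blast
  define D where "D = min (min e1 d1) (min (min (d/K1) (\<eta>/K1)) (e2/(C1+1)))"
  have D: "D > 0" using e1 \<eta> d d1 e2 U1 U2 by (simp add: D_def)
  have "norm (g w) \<le> (K2 * C * K1 ^ k) * norm w ^ k" if w: "norm w < D" for w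
  proof -
    obtain z where zU: "z \<in> U1" and wz: "w = \<phi>1 z" using e1 w by (force simp: D_def)
    have nz: "norm z \<le> K1 * norm w" using L1 zU U1(2) z1 wz by (auto simp: dist_norm)
    have "K1 * norm w < K1 * (d/K1)" using w U1(3) by (intro mult_strict_left_mono) (auto simp: D_def)
    then have zd: "norm z < d" using nz U1(3) by simp
    have "K1 * norm w < K1 * (\<eta>/K1)" using w U1(3) by (intro mult_strict_left_mono) (auto simp: D_def)
    then have z\<eta>: "norm z < \<eta>" using nz U1(3) by simp
    have feq: "f z = \<phi>2 (g w)" using \<eta>(2)[OF z\<eta>] wz by simp
    have "norm (g w) \<le> C1 * norm w" using d1(3) w by (simp add: D_def)
    also have "\<dots> \<le> (C1 + 1) * norm w" by (intro mult_right_mono) auto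
    also have "\<dots> < (C1 + 1) * (e2/(C1+1))"
      using w d1(2) by (intro mult_strict_left_mono) (auto simp: D_def)
    also have "\<dots> = e2" using d1(2) by simp
    finally have gU: "g w \<in> U2" using e2 by blast
    have "norm (g w) \<le> K2 * norm (f z)" using feq L2 gU U2(2) z2 by (auto simp: dist_norm)
    also have "\<dots> \<le> K2 * (C * norm z ^ k)" using d(3)[OF zd] U2(3) by simp
    also have "\<dots> \<le> K2 * (C * (K1 * norm w) ^ k)"
      using nz U2(3) d(2) by (intro mult_left_mono power_mono) auto
    finally show ?thesis by (simp add: power_mult_distrib mult_ac)
  qed
  then show ?thesis unfolding Gr_def using D by blast
qed


lemma ord0_le_iff:
  assumes "analytic_germ0 f"
  shows "enat k \<le> ord0 f \<longleftrightarrow> (\<forall>\<alpha>. mdeg \<alpha> < k \<longrightarrow> taylor_coeffs0 f \<alpha> = 0)"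
proof -
  define c where "c = taylor_coeffs0 f"
  show ?thesis
  proof (cases "\<exists>\<alpha>. c \<alpha> \<noteq> 0")
    case False then show ?thesis by (simp add: ord0_def c_def[symmetric])
  next
    case True
    define L where "L = (LEAST k. \<exists>\<alpha>. mdeg \<alpha> = k \<and> c \<alpha> \<noteq> 0)"
    have o: "ord0 f = enat L" using True by (simp add: ord0_def c_def[symmetric] L_def)
    have ex: "\<exists>\<alpha>. mdeg \<alpha> = L \<and> c \<alpha> \<noteq> 0" unfolding L_def
      by (rule LeastI_ex) (use True in blast)
    have lel: "c \<alpha> \<noteq> 0 \<Longrightarrow> L \<le> mdeg \<alpha>" for \<alpha> unfolding L_def by (rule Least_le) blast
    show ?thesis unfolding o c_def[symmetric] using ex lel by (auto simp: not_less) (meson leD le_trans)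
  qed
qed

lemma ord0_Gr:
  assumes a: "analytic_germ0 f"
  shows "enat k \<le> ord0 f \<longleftrightarrow> Gr f k"
proof -
  have "power_series_at0 (taylor_coeffs0 f) f"
    using a unfolding analytic_germ0_def taylor_coeffs0_def by (rule someI_ex)
  then obtain r where r: "r > 0" and hs: "\<forall>z. norm z < r \<longrightarrow> ((\<lambda>\<alpha>. taylor_coeffs0 f \<alpha> * monomial z \<alpha>) has_sum f z) UNIV"
    unfolding power_series_at0_def by blast
  show ?thesis unfolding ord0_le_iff[OF a] using ps_upper[OF hs r] ps_lower[OF hs r] by blast
qed

lemma Gr1:
  assumes a: "analytic_germ0 f" and f0: "f 0 = 0"
  shows "Gr f 1"
proof -
  obtain c where "power_series_at0 c f" using a unfolding analytic_germ0_def by blast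
  then obtain r where r: "r > 0" and hs: "\<forall>z. norm z < r \<longrightarrow> ((\<lambda>\<alpha>. c \<alpha> * monomial z \<alpha>) has_sum f z) UNIV"
    unfolding power_series_at0_def by blast
  have h0: "((\<lambda>\<alpha>. c \<alpha> * monomial 0 \<alpha>) has_sum f 0) UNIV" using hs r by simp
  have h1: "((\<lambda>\<alpha>. c \<alpha> * monomial 0 \<alpha>) has_sum c (\<lambda>_. 0)) UNIV"
    by (rule has_sum_finite_neutralI[of "{\<lambda>_. 0}"]) (auto simp: monomial_zero)
  have "c (\<lambda>_. 0) = 0" using has_sum_unique[OF h0 h1] f0 by simp
  then have "\<forall>\<alpha>. mdeg \<alpha> < 1 \<longrightarrow> c \<alpha> = 0" by (auto simp: mdeg_zero_iff)
  then show ?thesis by (rule ps_upper[OF hs r])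
qed

lemma enat_eqI2:
  fixes a b :: enat
  assumes "\<And>k::nat. enat k \<le> a \<longleftrightarrow> enat k \<le> b"
  shows "a = b"
proof (cases a)
  case (enat x)
  have "enat x \<le> b" using assms[of x] enat by simp
  moreover have "\<not> enat (Suc x) \<le> b" using assms[of "Suc x"] enat by simp
  ultimately show ?thesis using enat by (cases b) auto
next
  case infinity
  then have "\<forall>k. enat k \<le> b" using assms by simp
  then show ?thesis using infinity by (cases b) (auto, metis Suc_n_not_le_n)
qed

theorem corollary6p14:
  fixes f g :: "complex ^ 'n::finite \<Rightarrow> complex"
  assumes "analytic_germ0 f" and "analytic_germ0 g"
    and "bilip_RL_equiv f g"
  shows "ord0 f = ord0 g"
proof -
  obtain \<phi>1 \<phi>2 where p1: "bilip_homeo_germ0 \<phi>1" and p2: "bilip_homeo_germ0 (\<phi>2 :: complex \<Rightarrow> complex)"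
    and ev: "\<forall>\<^sub>F z in nhds 0. f z = \<phi>2 (g (\<phi>1 z))" and g0: "g 0 = 0"
    using assms(3) unfolding bilip_RL_equiv_def by blast
  have g1: "Gr g 1" by (rule Gr1[OF assms(2) g0])
  show ?thesis
  proof (rule enat_eqI2)
    fix k
    show "enat k \<le> ord0 f \<longleftrightarrow> enat k \<le> ord0 g"
      unfolding ord0_Gr[OF assms(1)] ord0_Gr[OF assms(2)]
      using transfer1[OF p1 p2 ev g1] transfer2[OF p1 p2 ev g1] by blast
  qed
qed

end
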